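(* Let $\kappa_1,\kappa_2$ be real constants and $F$ a smooth real function of one variable. Consider the equation $$\sigma_{rr}+(\kappa_1+\kappa_2)\frac{\sigma_r}{r}-\kappa_1(1-\kappa_2)\frac{\sigma}{r^2}=\big(F(\sigma)\big)_{tt}$$ for a smooth function $\sigma(r,t)$, $r>0$. Then every smooth solution satisfies the four conservation laws $\partial_r T^r+\partial_t T^t=0$ with $(T^r,T^t)$ given by $$\Big(r^{\kappa_2-1}(r\sigma_r+\kappa_1\sigma),\ -r^{\kappa_2}\sigma_tF'(\sigma)\Big),$$ $$\Big(t\,r^{\kappa_2-1}(r\sigma_r+\kappa_1\sigma),\ r^{\kappa_2}\big(F(\sigma)-t\sigma_tF'(\sigma)\big)\Big),$$ $$\Big(r^{\kappa_1}\big(r\sigma_r-(1-\kappa_2)\sigma\big),\ -r^{1+\kappa_1}\sigma_tF'(\sigma)\Big),$$ $$\Big(t\,r^{\kappa_1}\big(r\sigma_r-(1-\kappa_2)\sigma\big),\ r^{1+\kappa_1}\big(F(\sigma)-t\sigma_tF'(\sigma)\big)\Big),$$ corresponding to the multipliers $r^{\kappa_2}$, $tr^{\kappa_2}$, $r^{1+\kappa_1}$, $tr^{1+\kappa_1}$, respectively.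
   Context: Subscripts denote partial derivatives; $F'$ is the derivative of $F$. *)

theory Defs
  imports "HOL-Analysis.Analysis"
begin

definition pd_r :: "(real \<times> real \<Rightarrow> real) \<Rightarrow> real \<times> real \<Rightarrow> real" where
  "pd_r g = (\<lambda>(r, t). deriv (\<lambda>x. g (x, t)) r)"

definition pd_t :: "(real \<times> real \<Rightarrow> real) \<Rightarrow> real \<times> real \<Rightarrow> real" where
  "pd_t g = (\<lambda>(r, t). deriv (\<lambda>y. g (r, y)) t)"

text \<open>C^k regularity on a set U (intended: open): continuous for k = 0; for k+1,
  (Frechet) differentiable on U with both partial derivatives C^k.\<close>

fun Ck2 :: "nat \<Rightarrow> (real \<times> real) set \<Rightarrow> (real \<times> real \<Rightarrow> real) \<Rightarrow> bool" where
  "Ck2 0 U g = continuous_on U g"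
| "Ck2 (Suc k) U g = (g differentiable_on U \<and> Ck2 k U (pd_r g) \<and> Ck2 k U (pd_t g))"

definition smooth2 :: "(real \<times> real) set \<Rightarrow> (real \<times> real \<Rightarrow> real) \<Rightarrow> bool" where
  "smooth2 U g = (\<forall>k. Ck2 k U g)"

definition smooth1 :: "(real \<Rightarrow> real) \<Rightarrow> bool" where
  "smooth1 F = (\<forall>k. ((deriv ^^ k) F) differentiable_on UNIV)"

end

theory Submission
  imports Defs
begin

lemma pr_deriv:
  assumes "g differentiable_on U" "open U" "(r,t) \<in> U"
  shows "((\<lambda>x. g (x,t)) has_real_derivative pd_r g (r,t)) (at r)"
proof -
  have "g differentiable at (r,t)" using assms
    by (simp add: differentiable_on_eq_differentiable_at)
  moreover have "(\<lambda>x. (x,t)) differentiable at r" by simp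
  ultimately have "(\<lambda>x. g(x,t)) differentiable at r"
    using differentiable_chain_at[of "\<lambda>x. (x,t)" r g] by (simp add: o_def)
  then show ?thesis by (simp add: pd_r_def DERIV_deriv_iff_real_differentiable)
qed

lemma pt_deriv:
  assumes "g differentiable_on U" "open U" "(r,t) \<in> U"
  shows "((\<lambda>y. g (r,y)) has_real_derivative pd_t g (r,t)) (at t)"
proof -
  have "g differentiable at (r,t)" using assms
    by (simp add: differentiable_on_eq_differentiable_at)
  moreover have "(\<lambda>y. (r,y)) differentiable at t" by simp
  ultimately have "(\<lambda>y. g(r,y)) differentiable at t"
    using differentiable_chain_at[of "\<lambda>y. (r,y)" t g] by (simp add: o_def)
  then show ?thesis by (simp add: pd_t_def DERIV_deriv_iff_real_differentiable)
qed

lemma openU: "open {p::real\<times>real. fst p > 0}"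
  by (intro open_Collect_less continuous_intros)

lemma main_local:
  fixes k1 k2 :: real and F :: "real \<Rightarrow> real" and \<sigma> :: "real \<times> real \<Rightarrow> real"
  assumes F_smooth: "smooth1 F"
    and \<sigma>_smooth: "smooth2 {p. fst p > 0} \<sigma>"
    and eq: "\<And>r t. r > 0 \<Longrightarrow>
      pd_r (pd_r \<sigma>) (r, t) + (k1 + k2) * pd_r \<sigma> (r, t) / r
        - k1 * (1 - k2) * \<sigma> (r, t) / r ^ 2
      = pd_t (pd_t (\<lambda>p. F (\<sigma> p))) (r, t)"
    and r: "r > 0"
  shows
    "pd_r (\<lambda>(r, t). r powr (k2 - 1) * (r * pd_r \<sigma> (r, t) + k1 * \<sigma> (r, t))) (r, t)
     + pd_t (\<lambda>(r, t). - (r powr k2 * pd_t \<sigma> (r, t) * deriv F (\<sigma> (r, t)))) (r, t) = 0"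
    "pd_r (\<lambda>(r, t). t * r powr (k2 - 1) * (r * pd_r \<sigma> (r, t) + k1 * \<sigma> (r, t))) (r, t)
     + pd_t (\<lambda>(r, t). r powr k2 * (F (\<sigma> (r, t)) - t * pd_t \<sigma> (r, t) * deriv F (\<sigma> (r, t)))) (r, t) = 0"
    "pd_r (\<lambda>(r, t). r powr k1 * (r * pd_r \<sigma> (r, t) - (1 - k2) * \<sigma> (r, t))) (r, t)
     + pd_t (\<lambda>(r, t). - (r powr (1 + k1) * pd_t \<sigma> (r, t) * deriv F (\<sigma> (r, t)))) (r, t) = 0"
    "pd_r (\<lambda>(r, t). t * r powr k1 * (r * pd_r \<sigma> (r, t) - (1 - k2) * \<sigma> (r, t))) (r, t)
     + pd_t (\<lambda>(r, t). r powr (1 + k1) * (F (\<sigma> (r, t)) - t * pd_t \<sigma> (r, t) * deriv F (\<sigma> (r, t)))) (r, t) = 0"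
proof -
  let ?U = "{p::real\<times>real. fst p > 0}"
  have C2: "Ck2 2 ?U \<sigma>" using \<sigma>_smooth unfolding smooth2_def by blast
  hence d0: "\<sigma> differentiable_on ?U" and d1: "pd_r \<sigma> differentiable_on ?U"
    and d2: "pd_t \<sigma> differentiable_on ?U"
    by (simp_all add: numeral_2_eq_2)
  have inU: "\<And>y. (r,y) \<in> ?U" using r by simp
  define s where "s = \<sigma> (r,t)"
  define sr where "sr = pd_r \<sigma> (r,t)"
  define srr where "srr = pd_r (pd_r \<sigma>) (r,t)"
  define st where "st = pd_t \<sigma> (r,t)"
  define stt where "stt = pd_t (pd_t \<sigma>) (r,t)"
  define F1 where "F1 = deriv F s"
  define F2 where "F2 = deriv (deriv F) s"
  have A: "((\<lambda>x. \<sigma> (x,t)) has_real_derivative sr) (at r)"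
    unfolding sr_def by (rule pr_deriv[OF d0 openU inU])
  have B: "((\<lambda>x. pd_r \<sigma> (x,t)) has_real_derivative srr) (at r)"
    unfolding srr_def by (rule pr_deriv[OF d1 openU inU])
  have C: "\<And>y. ((\<lambda>y. \<sigma> (r,y)) has_real_derivative pd_t \<sigma> (r,y)) (at y)"
    by (rule pt_deriv[OF d0 openU inU])
  have D: "((\<lambda>y. pd_t \<sigma> (r,y)) has_real_derivative stt) (at t)"
    unfolding stt_def by (rule pt_deriv[OF d2 openU inU])
  have FD: "\<And>x. (F has_real_derivative deriv F x) (at x)"
  proof -
    fix x
    have "((deriv ^^ 0) F) differentiable_on UNIV" using F_smooth smooth1_def by blast
    thus "(F has_real_derivative deriv F x) (at x)"
      by (simp add: DERIV_deriv_iff_real_differentiable differentiable_on_def)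
  qed
  have FD2: "\<And>x. (deriv F has_real_derivative deriv (deriv F) x) (at x)"
  proof -
    fix x
    have "((deriv ^^ 1) F) differentiable_on UNIV" using F_smooth smooth1_def by blast
    thus "(deriv F has_real_derivative deriv (deriv F) x) (at x)"
      by (simp add: DERIV_deriv_iff_real_differentiable differentiable_on_def)
  qed
  have FDc: "\<And>x. ((\<lambda>x. deriv F x) has_real_derivative deriv (deriv F) x) (at x)"
    using FD2 by simp
  have Ft: "\<And>y. pd_t (\<lambda>p. F (\<sigma> p)) (r,y) = deriv F (\<sigma> (r,y)) * pd_t \<sigma> (r,y)"
  proof -
    fix y
    have "((\<lambda>y. F (\<sigma> (r,y))) has_real_derivative deriv F (\<sigma> (r,y)) * pd_t \<sigma> (r,y)) (at y)"
      using DERIV_chain2[OF FD C] by simp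
    thus "pd_t (\<lambda>p. F (\<sigma> p)) (r,y) = deriv F (\<sigma> (r,y)) * pd_t \<sigma> (r,y)"
      unfolding pd_t_def by (simp add: DERIV_imp_deriv)
  qed
  have G1: "((\<lambda>y. deriv F (\<sigma> (r,y))) has_real_derivative F2 * st) (at t)"
    unfolding F2_def s_def st_def using DERIV_chain2[OF FD2 C] by simp
  have G0: "((\<lambda>y. F (\<sigma> (r,y))) has_real_derivative F1 * st) (at t)"
    unfolding F1_def s_def st_def using DERIV_chain2[OF FD C] by simp
  have Ftt: "pd_t (pd_t (\<lambda>p. F (\<sigma> p))) (r, t) = F2 * st * st + F1 * stt"
  proof -
    have "((\<lambda>y. deriv F (\<sigma> (r,y)) * pd_t \<sigma> (r,y)) has_real_derivative F2 * st * st + F1 * stt) (at t)"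
      using DERIV_mult[OF G1 D] unfolding F1_def s_def st_def by (simp add: algebra_simps)
    hence "deriv (\<lambda>y. pd_t (\<lambda>p. F (\<sigma> p)) (r,y)) t = F2 * st * st + F1 * stt"
      unfolding Ft by (rule DERIV_imp_deriv)
    moreover have "pd_t (pd_t (\<lambda>p. F (\<sigma> p))) (r, t) = deriv (\<lambda>y. pd_t (\<lambda>p. F (\<sigma> p)) (r,y)) t"
      by (simp add: pd_t_def[of "pd_t _"])
    ultimately show ?thesis by simp
  qed
  have E: "srr + (k1 + k2) * sr / r - k1 * (1 - k2) * s / r ^ 2 = F2 * st * st + F1 * stt"
    using eq[OF r, of t] Ftt unfolding srr_def sr_def s_def by simp
  have P1: "r powr (k2 - 1) = r powr k2 / r" "r powr (k2 - 2) = r powr k2 / r^2"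
    "r powr (k1 - 1) = r powr k1 / r" "r powr (1 + k1) = r powr k1 * r"
    using r by (simp_all add: powr_diff powr_add power2_eq_square)
  have Gt: "((\<lambda>y. pd_t \<sigma> (r,y) * deriv F (\<sigma> (r,y))) has_real_derivative stt * F1 + F2 * st * st) (at t)"
    using DERIV_mult[OF D G1] unfolding F1_def s_def st_def by simp
  note defs = s_def sr_def srr_def st_def stt_def F1_def F2_def
  note R1 = DERIV_mult[OF has_real_derivative_powr[OF r, of "k2-1"] DERIV_add[OF DERIV_mult[OF DERIV_ident B] DERIV_cmult[OF A, of k1]]]
  note R2 = DERIV_mult[OF DERIV_cmult[OF has_real_derivative_powr[OF r, of "k2-1"], of t] DERIV_add[OF DERIV_mult[OF DERIV_ident B] DERIV_cmult[OF A, of k1]]]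
  note R3 = DERIV_mult[OF has_real_derivative_powr[OF r, of "k1"] DERIV_diff[OF DERIV_mult[OF DERIV_ident B] DERIV_cmult[OF A, of "1-k2"]]]
  note R4 = DERIV_mult[OF DERIV_cmult[OF has_real_derivative_powr[OF r, of "k1"], of t] DERIV_diff[OF DERIV_mult[OF DERIV_ident B] DERIV_cmult[OF A, of "1-k2"]]]
  note T1 = DERIV_minus[OF DERIV_mult[OF DERIV_mult[OF DERIV_const[of "r powr k2"] D] G1]]
  note T2 = DERIV_cmult[OF DERIV_diff[OF G0 DERIV_mult[OF DERIV_mult[OF DERIV_ident D] G1]], of "r powr k2"]
  note T3 = DERIV_minus[OF DERIV_mult[OF DERIV_mult[OF DERIV_const[of "r powr (1+k1)"] D] G1]]
  note T4 = DERIV_cmult[OF DERIV_diff[OF G0 DERIV_mult[OF DERIV_mult[OF DERIV_ident D] G1]], of "r powr (1+k1)"]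
  note X = R1[THEN DERIV_imp_deriv] R2[THEN DERIV_imp_deriv] R3[THEN DERIV_imp_deriv] R4[THEN DERIV_imp_deriv]
    T1[THEN DERIV_imp_deriv] T2[THEN DERIV_imp_deriv] T3[THEN DERIV_imp_deriv] T4[THEN DERIV_imp_deriv]
  note Y = X[folded defs, unfolded pd_r_def pd_t_def prod.case]
  have Er: "srr = F2 * st * st + F1 * stt - (k1 + k2) * sr / r + k1 * (1 - k2) * s / r ^ 2"
    using E by simp
  show "pd_r (\<lambda>(r, t). r powr (k2 - 1) * (r * pd_r \<sigma> (r, t) + k1 * \<sigma> (r, t))) (r, t)
     + pd_t (\<lambda>(r, t). - (r powr k2 * pd_t \<sigma> (r, t) * deriv F (\<sigma> (r, t)))) (r, t) = 0"
    unfolding pd_r_def pd_t_def prod.case Y(1) Y(5)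
    using r by (simp add: P1 Er power2_eq_square field_simps)
  show "pd_r (\<lambda>(r, t). t * r powr (k2 - 1) * (r * pd_r \<sigma> (r, t) + k1 * \<sigma> (r, t))) (r, t)
     + pd_t (\<lambda>(r, t). r powr k2 * (F (\<sigma> (r, t)) - t * pd_t \<sigma> (r, t) * deriv F (\<sigma> (r, t)))) (r, t) = 0"
    unfolding pd_r_def pd_t_def prod.case Y(2) Y(6)
    using r by (simp add: P1 Er power2_eq_square field_simps)
  show "pd_r (\<lambda>(r, t). r powr k1 * (r * pd_r \<sigma> (r, t) - (1 - k2) * \<sigma> (r, t))) (r, t)
     + pd_t (\<lambda>(r, t). - (r powr (1 + k1) * pd_t \<sigma> (r, t) * deriv F (\<sigma> (r, t)))) (r, t) = 0"
    unfolding pd_r_def pd_t_def prod.case Y(3) Y(7)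
    using r by (simp add: P1 Er power2_eq_square field_simps)
  show "pd_r (\<lambda>(r, t). t * r powr k1 * (r * pd_r \<sigma> (r, t) - (1 - k2) * \<sigma> (r, t))) (r, t)
     + pd_t (\<lambda>(r, t). r powr (1 + k1) * (F (\<sigma> (r, t)) - t * pd_t \<sigma> (r, t) * deriv F (\<sigma> (r, t)))) (r, t) = 0"
    unfolding pd_r_def pd_t_def prod.case Y(4) Y(8)
    using r by (simp add: P1 Er power2_eq_square field_simps)
qed
theorem mainTheorem2:
  fixes k1 k2 :: real
    and F :: "real \<Rightarrow> real"
    and \<sigma> :: "real \<times> real \<Rightarrow> real"
  assumes F_smooth: "smooth1 F"
    and \<sigma>_smooth: "smooth2 {p. fst p > 0} \<sigma>"
    and eq: "\<And>r t. r > 0 \<Longrightarrow>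
      pd_r (pd_r \<sigma>) (r, t) + (k1 + k2) * pd_r \<sigma> (r, t) / r
        - k1 * (1 - k2) * \<sigma> (r, t) / r ^ 2
      = pd_t (pd_t (\<lambda>p. F (\<sigma> p))) (r, t)"
  shows
    "(\<forall>r t. r > 0 \<longrightarrow>
       pd_r (\<lambda>(r, t). r powr (k2 - 1) * (r * pd_r \<sigma> (r, t) + k1 * \<sigma> (r, t))) (r, t)
     + pd_t (\<lambda>(r, t). - (r powr k2 * pd_t \<sigma> (r, t) * deriv F (\<sigma> (r, t)))) (r, t) = 0)
   \<and> (\<forall>r t. r > 0 \<longrightarrow>
       pd_r (\<lambda>(r, t). t * r powr (k2 - 1) * (r * pd_r \<sigma> (r, t) + k1 * \<sigma> (r, t))) (r, t)
     + pd_t (\<lambda>(r, t). r powr k2 * (F (\<sigma> (r, t)) - t * pd_t \<sigma> (r, t) * deriv F (\<sigma> (r, t)))) (r, t) = 0)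
   \<and> (\<forall>r t. r > 0 \<longrightarrow>
       pd_r (\<lambda>(r, t). r powr k1 * (r * pd_r \<sigma> (r, t) - (1 - k2) * \<sigma> (r, t))) (r, t)
     + pd_t (\<lambda>(r, t). - (r powr (1 + k1) * pd_t \<sigma> (r, t) * deriv F (\<sigma> (r, t)))) (r, t) = 0)
   \<and> (\<forall>r t. r > 0 \<longrightarrow>
       pd_r (\<lambda>(r, t). t * r powr k1 * (r * pd_r \<sigma> (r, t) - (1 - k2) * \<sigma> (r, t))) (r, t)
     + pd_t (\<lambda>(r, t). r powr (1 + k1) * (F (\<sigma> (r, t)) - t * pd_t \<sigma> (r, t) * deriv F (\<sigma> (r, t)))) (r, t) = 0)"
    using main_local[OF F_smooth \<sigma>_smooth eq] by blast

end
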